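(* Fix real numbers $\lambda>0$, $\mu>0$, $\Delta\ge 0$ and $T_{cl}>0$. Let $(N_k)_{k\ge1}$ be positive integers with $N_k\to\infty$, and let $m_k,c_k$ be positive integers with $m_kc_k=N_k$, $m_k\to\infty$ and $c_k\to\infty$. Define $$a_k=\lambda\Delta+\frac{\lambda}{m_k\mu},\qquad P_{b,k}=\frac{a_k^{c_k}/c_k!}{\sum_{j=0}^{c_k}a_k^{j}/j!},\qquad \mathbb{E}[T_{\text{sys},k}]=\Big(\Delta+\frac{1}{m_k\mu}\Big)(1-P_{b,k})+T_{cl}\,P_{b,k}.$$ Then $\lim_{k\to\infty}\mathbb{E}[T_{\text{sys},k}]=\Delta$.
   Context: Model: an edge system with $N$ workers is split into $c$ groups of $m$ workers ($N=mc$); jobs arrive as a Poisson process of rate $\lambda$, each job is replicated on the $m$ workers of a free group, and jobs finding all groups busy are blocked and sent to the cloud, where they take expected time $T_{cl}$. Worker service times are shifted exponential $\mathrm{SExp}(\Delta,\mu)$ ($\Delta$ plus an exponential of rate $\mu$), so the job-computing time has mean $\Delta+\frac{1}{m\mu}$. The blocking probability is the Erlang B formula with $c$ servers and offered load $\lambda(\Delta+\frac{1}{m\mu})$, and the average system time is $(1-P_b)\mathbb{E}[T_{\text{job}}]+P_b T_{cl}$. *)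

theory Defs
  imports "HOL-Analysis.Analysis"
begin

definition erlang_B :: "nat \<Rightarrow> real \<Rightarrow> real" where
  "erlang_B c a = (a ^ c / fact c) / (\<Sum>j=0..c. a ^ j / fact j)"

definition offered_load :: "real \<Rightarrow> real \<Rightarrow> real \<Rightarrow> nat \<Rightarrow> real" where
  "offered_load lam mu Delta m = lam * Delta + lam / (real m * mu)"

definition avg_sys_time :: "real \<Rightarrow> real \<Rightarrow> real \<Rightarrow> real \<Rightarrow> nat \<Rightarrow> nat \<Rightarrow> real" where
  "avg_sys_time lam mu Delta Tcl m c =
     (let Pb = erlang_B c (offered_load lam mu Delta m)
      in (Delta + 1 / (real m * mu)) * (1 - Pb) + Tcl * Pb)"

end

theory Submission
  imports Defs
begin

lemma pow_fact_zero: "(\<lambda>n. (B::real) ^ n / fact n) \<longlonglongrightarrow> 0"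
proof -
  have "summable (\<lambda>n. inverse (fact n) * B ^ n)" by (rule summable_exp)
  hence "(\<lambda>n. inverse (fact n) * B ^ n) \<longlonglongrightarrow> 0" by (rule summable_LIMSEQ_zero)
  thus ?thesis by (simp add: divide_inverse mult.commute)
qed

lemma erlang_bounds:
  assumes "a \<ge> 0"
  shows "0 \<le> erlang_B c a" "erlang_B c a \<le> a ^ c / fact c"
proof -
  let ?S = "\<Sum>j=0..c. a ^ j / fact j"
  have "(\<Sum>j\<in>{0}. a ^ j / fact j) \<le> ?S"
    by (rule sum_mono2) (use assms in auto)
  hence S1: "1 \<le> ?S" by simp
  have nn: "0 \<le> a ^ c / fact c" using assms by simp
  show "0 \<le> erlang_B c a" unfolding erlang_B_def using S1 nn assms by (intro divide_nonneg_nonneg) auto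
  show "erlang_B c a \<le> a ^ c / fact c" unfolding erlang_B_def
  proof -
    have "a ^ c / fact c / ?S \<le> a ^ c / fact c / 1"
      using S1 nn by (intro divide_left_mono) auto
    thus "a ^ c / fact c / ?S \<le> a ^ c / fact c" by simp
  qed
qed

theorem theorem3:
  fixes lam mu Delta Tcl :: real and N m c :: "nat \<Rightarrow> nat"
  assumes "lam > 0" and "mu > 0" and "Delta \<ge> 0" and "Tcl > 0"
    and "\<And>k. N k > 0" and "\<And>k. m k > 0" and "\<And>k. c k > 0"
    and "\<And>k. m k * c k = N k"
    and "filterlim N at_top sequentially"
    and "filterlim m at_top sequentially"
    and "filterlim c at_top sequentially"
  shows "(\<lambda>k. avg_sys_time lam mu Delta Tcl (m k) (c k)) \<longlonglongrightarrow> Delta"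
proof -
  define B where "B = lam * Delta + lam / mu"
  define P where "P k = erlang_B (c k) (offered_load lam mu Delta (m k))" for k
  have a_nn: "0 \<le> offered_load lam mu Delta (m k)" for k
    unfolding offered_load_def using assms by simp
  have a_le: "offered_load lam mu Delta (m k) \<le> B" for k
  proof -
    have "real (m k) \<ge> 1" using assms(6)[of k] by simp
    hence "lam / (real (m k) * mu) \<le> lam / mu"
      using assms by (simp add: frac_le)
    thus ?thesis unfolding offered_load_def B_def by simp
  qed
  have PB: "0 \<le> P k \<and> P k \<le> B ^ (c k) / fact (c k)" for k
  proof -
    have "offered_load lam mu Delta (m k) ^ c k \<le> B ^ c k"
      using a_nn a_le by (intro power_mono) auto
    hence "offered_load lam mu Delta (m k) ^ c k / fact (c k) \<le> B ^ c k / fact (c k)"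
      by (simp add: divide_right_mono)
    thus ?thesis unfolding P_def using erlang_bounds[OF a_nn[of k], of "c k"] by linarith
  qed
  have lim0: "(\<lambda>k. B ^ (c k) / fact (c k)) \<longlonglongrightarrow> 0"
    using filterlim_compose[OF pow_fact_zero assms(11)] .
  have P0: "P \<longlonglongrightarrow> 0"
    by (rule tendsto_sandwich[OF _ _ tendsto_const lim0]) (use PB in auto)
  have m_inv: "(\<lambda>k. 1 / (real (m k) * mu)) \<longlonglongrightarrow> 0"
  proof -
    have "filterlim (\<lambda>k. real (m k)) at_top sequentially"
      using filterlim_compose[OF filterlim_real_sequentially assms(10)] .
    hence "filterlim (\<lambda>k. real (m k) * mu) at_top sequentially"
      by (rule filterlim_at_top_mult_tendsto_pos[OF tendsto_const assms(2)])
    hence "filterlim (\<lambda>k. real (m k) * mu) at_infinity sequentially"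
      by (rule filterlim_at_top_imp_at_infinity)
    thus ?thesis by (rule tendsto_divide_0[OF tendsto_const])
  qed
  have "(\<lambda>k. (Delta + 1 / (real (m k) * mu)) * (1 - P k) + Tcl * P k)
      \<longlonglongrightarrow> (Delta + 0) * (1 - 0) + Tcl * 0"
    by (intro tendsto_intros m_inv P0)
  thus ?thesis unfolding avg_sys_time_def P_def Let_def by simp
qed

end
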